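(* Let $G=(V,E)$ be a symmetric caterpillar with $n\ge 1$ spine vertices $s_1,\dots,s_n$, where $L_i$ denotes the number of leaves attached to $s_i$, and let $L=\max_{1\le i\le n}L_i$. Then $IDI(G)=L$ if $L\ge 2$, and $IDI(G)=2$ if $L=1$.
   Context: A caterpillar is a tree consisting of a path (the spine) $s_1,s_2,\dots,s_n$ together with leaves each attached to a spine vertex; $L_i\ge 0$ is the number of leaves attached to $s_i$, and $L_1,L_n\ge 1$ (a spine vertex is exactly a vertex of degree at least two, except that when $n=1$ the caterpillar is the star $K_{1,L_1}$). The caterpillar is symmetric if $L_j=L_{n+1-j}$ for all $1\le j\le\lfloor n/2\rfloor$. For a finite simple connected graph $G=(V,E)$ with diameter $d$, a rank assignment is a function $f:V\to\mathbb{R}$; under $f$, the string of a vertex $v$ is the $d$-vector whose $i$-th coordinate is the sum of $f(w)$ over all vertices $w$ with $d(v,w)=i$. The ID-index $IDI(G)$ is the minimum $k$ such that there exists $f:V\to\mathbb{R}$ with $|f(V)|=k$ under which all vertices have distinct strings. *)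

theory Defs
  imports Complex_Main
begin

definition walk_len :: "('a \<Rightarrow> 'a \<Rightarrow> bool) \<Rightarrow> 'a \<Rightarrow> 'a \<Rightarrow> nat \<Rightarrow> bool" where
  "walk_len E u v k \<longleftrightarrow> (\<exists>p :: nat \<Rightarrow> 'a. p 0 = u \<and> p k = v \<and> (\<forall>i<k. E (p i) (p (Suc i))))"

text \<open>Graph distance (for connected graphs): least length of a walk.\<close>
definition gdist :: "('a \<Rightarrow> 'a \<Rightarrow> bool) \<Rightarrow> 'a \<Rightarrow> 'a \<Rightarrow> nat" where
  "gdist E u v = (LEAST k. walk_len E u v k)"

definition diam :: "'a set \<Rightarrow> ('a \<Rightarrow> 'a \<Rightarrow> bool) \<Rightarrow> nat" where
  "diam V E = Max {gdist E u v | u v. u \<in> V \<and> v \<in> V}"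

definition vstring :: "'a set \<Rightarrow> ('a \<Rightarrow> 'a \<Rightarrow> bool) \<Rightarrow> ('a \<Rightarrow> real) \<Rightarrow> 'a \<Rightarrow> real list" where
  "vstring V E f v = map (\<lambda>i. \<Sum>w\<in>{w\<in>V. gdist E v w = i}. f w) [1..<Suc (diam V E)]"

definition IDI :: "'a set \<Rightarrow> ('a \<Rightarrow> 'a \<Rightarrow> bool) \<Rightarrow> nat" where
  "IDI V E = (LEAST k. \<exists>f :: 'a \<Rightarrow> real. card (f ` V) = k \<and> inj_on (vstring V E f) V)"

text \<open>Vertex (i,0) is the spine vertex s_i (1 \<le> i \<le> n); vertex (i,j) with
  1 \<le> j \<le> L i is the j-th leaf attached to s_i.\<close>
definition cat_V :: "nat \<Rightarrow> (nat \<Rightarrow> nat) \<Rightarrow> (nat \<times> nat) set" where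
  "cat_V n L = {(i, j). 1 \<le> i \<and> i \<le> n \<and> j \<le> L i}"

definition cat_E :: "nat \<Rightarrow> (nat \<Rightarrow> nat) \<Rightarrow> nat \<times> nat \<Rightarrow> nat \<times> nat \<Rightarrow> bool" where
  "cat_E n L x y \<longleftrightarrow> x \<in> cat_V n L \<and> y \<in> cat_V n L \<and>
     ((snd x = 0 \<and> snd y = 0 \<and> (fst x = Suc (fst y) \<or> fst y = Suc (fst x)))
      \<or> (snd x = 0 \<and> snd y \<noteq> 0 \<and> fst x = fst y)
      \<or> (snd x \<noteq> 0 \<and> snd y = 0 \<and> fst x = fst y))"

definition symmetric_caterpillar :: "nat \<Rightarrow> (nat \<Rightarrow> nat) \<Rightarrow> bool" where
  "symmetric_caterpillar n L \<longleftrightarrow> (\<forall>j. 1 \<le> j \<and> j \<le> n div 2 \<longrightarrow> L j = L (n + 1 - j))"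

end

theory Submission
  imports Defs
begin

definition cd :: "nat \<times> nat \<Rightarrow> nat \<times> nat \<Rightarrow> nat" where
  "cd x y = (if x = y then 0 else
     (if fst x \<le> fst y then fst y - fst x else fst x - fst y)
     + (if snd x = 0 then 0 else 1) + (if snd y = 0 then 0 else 1))"

lemma walk_refl: "walk_len E u u 0"
  unfolding walk_len_def by (rule exI[of _ "\<lambda>_. u"]) simp

lemma walk_snoc: assumes "walk_len E u v k" "E v w" shows "walk_len E u w (Suc k)"
proof -
  obtain p where p: "p 0 = u" "p k = v" "\<forall>i<k. E (p i) (p (Suc i))"
    using assms(1) unfolding walk_len_def by blast
  let ?q = "p(Suc k := w)"
  have "?q 0 = u" using p by simp
  moreover have "?q (Suc k) = w" by simp
  moreover have "\<forall>i<Suc k. E (?q i) (?q (Suc i))"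
  proof (intro allI impI)
    fix i assume "i < Suc k"
    then consider "i < k" | "i = k" by linarith
    then show "E (?q i) (?q (Suc i))"
      by cases (use p assms(2) in auto)
  qed
  ultimately show ?thesis unfolding walk_len_def by blast
qed

lemma walk_up: assumes "walk_len (cat_E n L) u (i,0) k" "1 \<le> i" "i + m \<le> n"
  shows "walk_len (cat_E n L) u (i+m,0) (k+m)"
  using assms(3)
proof (induction m)
  case 0 then show ?case using assms(1) by simp
next
  case (Suc m)
  have "cat_E n L (i+m,0) (i+Suc m,0)" using Suc.prems assms(2)
    by (simp add: cat_E_def cat_V_def)
  then show ?case using walk_snoc[OF Suc.IH] Suc.prems by simp
qed

lemma walk_down: assumes "walk_len (cat_E n L) u (i,0) k" "m < i" "i \<le> n"
  shows "walk_len (cat_E n L) u (i-m,0) (k+m)"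
  using assms(2)
proof (induction m)
  case 0 then show ?case using assms(1) by simp
next
  case (Suc m)
  have "cat_E n L (i-m,0) (i-Suc m,0)" using Suc.prems assms(3)
    by (auto simp add: cat_E_def cat_V_def)
  then show ?case using walk_snoc[OF Suc.IH] Suc.prems by simp
qed

lemma walk_exists: assumes "x \<in> cat_V n L" "y \<in> cat_V n L"
  shows "walk_len (cat_E n L) x y (cd x y)"
proof (cases "x = y")
  case True then show ?thesis by (simp add: cd_def walk_refl)
next
  case False
  obtain i a where x: "x = (i,a)" by (cases x)
  obtain j b where y: "y = (j,b)" by (cases y)
  have xi: "1 \<le> i" "i \<le> n" "a \<le> L i" using assms(1) x by (auto simp: cat_V_def)
  have yj: "1 \<le> j" "j \<le> n" "b \<le> L j" using assms(2) y by (auto simp: cat_V_def)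
  define c1 where "c1 = (if a = 0 then 0 else 1::nat)"
  have w1: "walk_len (cat_E n L) x (i,0) c1"
  proof (cases "a = 0")
    case True then show ?thesis using x walk_refl by (simp add: c1_def)
  next
    case False
    have "cat_E n L (i,a) (i,0)" using xi False by (simp add: cat_E_def cat_V_def)
    then show ?thesis using walk_snoc[OF walk_refl] x False by (simp add: c1_def)
  qed
  define c2 where "c2 = c1 + (if i \<le> j then j - i else i - j)"
  have w2: "walk_len (cat_E n L) x (j,0) c2"
  proof (cases "i \<le> j")
    case True
    then show ?thesis using walk_up[OF w1 xi(1), of "j - i"] yj by (simp add: c2_def)
  next
    case False
    then show ?thesis using walk_down[OF w1, of "i - j"] xi yj by (simp add: c2_def)
  qed
  have w3: "walk_len (cat_E n L) x y (c2 + (if b = 0 then 0 else 1))"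
  proof (cases "b = 0")
    case True then show ?thesis using w2 y by simp
  next
    case False
    have "cat_E n L (j,0) (j,b)" using yj False by (simp add: cat_E_def cat_V_def)
    then show ?thesis using walk_snoc[OF w2] y False by simp
  qed
  moreover have "cd x y = c2 + (if b = 0 then 0 else 1)"
    using False x y by (simp add: cd_def c2_def c1_def)
  ultimately show ?thesis by simp
qed

lemma edge_step: "cat_E n L y z \<Longrightarrow> cd x z \<le> cd x y + 1"
  by (cases x; cases y; cases z) (auto simp: cd_def cat_E_def split: if_splits)

lemma walk_lower: assumes "walk_len (cat_E n L) x y k" shows "cd x y \<le> k"
proof -
  obtain p where p: "p 0 = x" "p k = y" "\<forall>i<k. cat_E n L (p i) (p (Suc i))"
    using assms unfolding walk_len_def by blast
  have "\<forall>m. m \<le> k \<longrightarrow> cd x (p m) \<le> m"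
  proof (intro allI)
    fix m show "m \<le> k \<longrightarrow> cd x (p m) \<le> m"
    proof (induction m)
      case 0 then show ?case using p by (simp add: cd_def)
    next
      case (Suc m)
      then show ?case using p(3) edge_step[of n L "p m" "p (Suc m)" x] by fastforce
    qed
  qed
  then show ?thesis using p by auto
qed

lemma gdist_cd: assumes "x \<in> cat_V n L" "y \<in> cat_V n L"
  shows "gdist (cat_E n L) x y = cd x y"
  unfolding gdist_def
  by (rule Least_equality) (use walk_exists[OF assms] walk_lower in auto)

definition Sc :: "nat \<Rightarrow> (nat \<Rightarrow> nat) \<Rightarrow> (nat \<times> nat \<Rightarrow> real) \<Rightarrow> nat \<times> nat \<Rightarrow> nat \<Rightarrow> real" where
  "Sc n L f v t = sum f {w \<in> cat_V n L. cd v w = t}"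

lemma finite_V: "finite (cat_V n L)"
proof -
  have "cat_V n L \<subseteq> {..n} \<times> {..Max (L ` {..n})}"
  proof
    fix x assume "x \<in> cat_V n L"
    then obtain i j where x: "x = (i,j)" "i \<le> n" "j \<le> L i" by (auto simp: cat_V_def)
    have m: "L i \<le> Max (L ` {..n})" using x by (intro Max_ge) auto
    then show "x \<in> {..n} \<times> {..Max (L ` {..n})}" using x le_trans[OF x(3) m] by auto
  qed
  then show ?thesis by (rule finite_subset) auto
qed

lemma diam_ge: assumes "x \<in> cat_V n L" "y \<in> cat_V n L"
  shows "cd x y \<le> diam (cat_V n L) (cat_E n L)"
proof -
  have eq: "{gdist (cat_E n L) u v | u v. u \<in> cat_V n L \<and> v \<in> cat_V n L}
      = (\<lambda>(u,v). gdist (cat_E n L) u v) ` (cat_V n L \<times> cat_V n L)" by auto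
  have "finite {gdist (cat_E n L) u v | u v. u \<in> cat_V n L \<and> v \<in> cat_V n L}"
    unfolding eq using finite_V by auto
  moreover have "cd x y \<in> {gdist (cat_E n L) u v | u v. u \<in> cat_V n L \<and> v \<in> cat_V n L}"
    unfolding gdist_cd[OF assms, symmetric] using assms by blast
  ultimately show ?thesis unfolding diam_def by (rule Max_ge)
qed

lemma vstring_eq: assumes "v \<in> cat_V n L"
  shows "vstring (cat_V n L) (cat_E n L) f v
     = map (Sc n L f v) [1..<Suc (diam (cat_V n L) (cat_E n L))]"
  unfolding vstring_def Sc_def
proof (rule map_cong[OF refl])
  fix t
  have "{w \<in> cat_V n L. gdist (cat_E n L) v w = t} = {w \<in> cat_V n L. cd v w = t}"
    using gdist_cd[OF assms] by auto
  then show "sum f {w \<in> cat_V n L. gdist (cat_E n L) v w = t} = sum f {w \<in> cat_V n L. cd v w = t}"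
    by simp
qed

lemma vstring_nth: assumes "v \<in> cat_V n L" "1 \<le> t" "t \<le> diam (cat_V n L) (cat_E n L)"
  shows "vstring (cat_V n L) (cat_E n L) f v ! (t - 1) = Sc n L f v t"
proof -
  let ?d = "diam (cat_V n L) (cat_E n L)"
  have "t - 1 < length [1..<Suc ?d]" using assms by simp
  then have "map (Sc n L f v) [1..<Suc ?d] ! (t - 1) = Sc n L f v ([1..<Suc ?d] ! (t - 1))"
    by (rule nth_map)
  also have "[1..<Suc ?d] ! (t - 1) = t" using assms by (simp add: nth_upt del: upt_Suc)
  finally show ?thesis using vstring_eq[OF assms(1)] by simp
qed

lemma vstring_eqD: assumes "v \<in> cat_V n L" "w \<in> cat_V n L"
  "vstring (cat_V n L) (cat_E n L) f v = vstring (cat_V n L) (cat_E n L) f w"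
  "1 \<le> t" "t \<le> diam (cat_V n L) (cat_E n L)"
  shows "Sc n L f v t = Sc n L f w t"
  using vstring_nth[OF assms(1,4,5), of f] vstring_nth[OF assms(2,4,5), of f] assms(3) by simp

lemma cd_pos: "x \<noteq> y \<Longrightarrow> cd x y \<ge> 1"
  by (cases x; cases y) (auto simp: cd_def)

lemma cd_self[simp]: "cd x x = 0" by (simp add: cd_def)

lemma Sc_total: assumes "v \<in> cat_V n L"
  shows "(\<Sum>t\<in>{1..diam (cat_V n L) (cat_E n L)}. Sc n L f v t) = sum f (cat_V n L) - f v"
proof -
  let ?V = "cat_V n L" and ?d = "diam (cat_V n L) (cat_E n L)"
  have "(\<Sum>t\<in>{1..?d}. sum f {x. x \<in> ?V - {v} \<and> cd v x = t}) = sum f (?V - {v})"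
  proof (rule sum.group)
    show "cd v ` (?V - {v}) \<subseteq> {1..?d}"
    proof
      fix y assume "y \<in> cd v ` (?V - {v})"
      then obtain x where x: "x \<in> ?V" "x \<noteq> v" "y = cd v x" by auto
      then show "y \<in> {1..?d}" using cd_pos[of v x] diam_ge[OF assms x(1)] by auto
    qed
  qed (use finite_V in auto)
  moreover have "\<And>t. t \<in> {1..?d} \<Longrightarrow> {x. x \<in> ?V - {v} \<and> cd v x = t} = {w \<in> ?V. cd v w = t}"
    by auto
  ultimately have "(\<Sum>t\<in>{1..?d}. Sc n L f v t) = sum f (?V - {v})"
    unfolding Sc_def by simp
  also have "\<dots> = sum f ?V - f v" using assms finite_V by (simp add: sum_diff1)
  finally show ?thesis .
qed

lemma f_eq: assumes "v \<in> cat_V n L" "w \<in> cat_V n L"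
  "vstring (cat_V n L) (cat_E n L) f v = vstring (cat_V n L) (cat_E n L) f w"
  shows "f v = f w"
proof -
  have "(\<Sum>t\<in>{1..diam (cat_V n L) (cat_E n L)}. Sc n L f v t)
      = (\<Sum>t\<in>{1..diam (cat_V n L) (cat_E n L)}. Sc n L f w t)"
    by (rule sum.cong[OF refl]) (use vstring_eqD[OF assms] in auto)
  then show ?thesis using Sc_total[OF assms(1)] Sc_total[OF assms(2)] by simp
qed

lemma Sc_reindex:
  assumes "\<And>x. x \<in> cat_V n L \<Longrightarrow> \<pi> x \<in> cat_V n L"
    "\<And>x. x \<in> cat_V n L \<Longrightarrow> \<pi> (\<pi> x) = x"
    "\<And>x y. x \<in> cat_V n L \<Longrightarrow> y \<in> cat_V n L \<Longrightarrow> cd (\<pi> x) (\<pi> y) = cd x y"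
    "v \<in> cat_V n L"
  shows "Sc n L f (\<pi> v) t = Sc n L (f \<circ> \<pi>) v t"
proof -
  have c: "cd v (\<pi> b) = cd (\<pi> v) b" if "b \<in> cat_V n L" for b
  proof -
    have "cd v (\<pi> b) = cd (\<pi> (\<pi> v)) (\<pi> b)" using assms(2)[OF assms(4)] by simp
    also have "\<dots> = cd (\<pi> v) b" using assms(1)[OF assms(4)] that by (rule assms(3))
    finally show ?thesis .
  qed
  show ?thesis unfolding Sc_def
    by (rule sum.reindex_bij_witness[of _ \<pi> \<pi>]) (use assms c in auto)
qed

lemma vstring_auto:
  assumes "\<And>x. x \<in> cat_V n L \<Longrightarrow> \<pi> x \<in> cat_V n L"
    "\<And>x. x \<in> cat_V n L \<Longrightarrow> \<pi> (\<pi> x) = x"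
    "\<And>x y. x \<in> cat_V n L \<Longrightarrow> y \<in> cat_V n L \<Longrightarrow> cd (\<pi> x) (\<pi> y) = cd x y"
    "v \<in> cat_V n L"
    "\<And>x. x \<in> cat_V n L \<Longrightarrow> f (\<pi> x) = f x"
  shows "vstring (cat_V n L) (cat_E n L) f (\<pi> v) = vstring (cat_V n L) (cat_E n L) f v"
proof -
  have "\<And>t. Sc n L f (\<pi> v) t = Sc n L f v t"
  proof -
    fix t
    have "Sc n L f (\<pi> v) t = Sc n L (f \<circ> \<pi>) v t" by (rule Sc_reindex[OF assms(1-4)])
    also have "\<dots> = Sc n L f v t" unfolding Sc_def by (rule sum.cong) (use assms(5) in auto)
    finally show "Sc n L f (\<pi> v) t = Sc n L f v t" .
  qed
  then show ?thesis using vstring_eq[OF assms(4)] vstring_eq[OF assms(1)[OF assms(4)]] by simp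
qed

definition tau :: "nat \<times> nat \<Rightarrow> nat \<times> nat \<Rightarrow> nat \<times> nat \<Rightarrow> nat \<times> nat" where
  "tau p q x = (if x = p then q else if x = q then p else x)"

definition sig :: "nat \<Rightarrow> nat \<times> nat \<Rightarrow> nat \<times> nat" where
  "sig n x = (n + 1 - fst x, snd x)"

lemma Lsym: assumes "symmetric_caterpillar n L" "1 \<le> i" "i \<le> n"
  shows "L (n + 1 - i) = L i"
proof -
  consider "i \<le> n div 2" | "n + 1 - i \<le> n div 2" | "i = n + 1 - i" by linarith
  then show ?thesis
  proof cases
    case 1 then show ?thesis using assms unfolding symmetric_caterpillar_def by auto
  next
    case 2
    have "L (n + 1 - i) = L (n + 1 - (n + 1 - i))"
      using 2 assms unfolding symmetric_caterpillar_def by auto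
    then show ?thesis using assms by simp
  next
    case 3 then show ?thesis by simp
  qed
qed

lemma sig_V: assumes "symmetric_caterpillar n L" "x \<in> cat_V n L" shows "sig n x \<in> cat_V n L"
  using assms Lsym[OF assms(1)] by (auto simp: sig_def cat_V_def)

lemma sig_inv: "x \<in> cat_V n L \<Longrightarrow> sig n (sig n x) = x"
  by (auto simp: sig_def cat_V_def)

lemma sig_cd: "x \<in> cat_V n L \<Longrightarrow> y \<in> cat_V n L \<Longrightarrow> cd (sig n x) (sig n y) = cd x y"
  by (cases x; cases y) (auto simp: sig_def cat_V_def cd_def)

lemma tau_inv: "tau p q (tau p q x) = x"
  by (auto simp: tau_def)

lemma tau_V: "p \<in> cat_V n L \<Longrightarrow> q \<in> cat_V n L \<Longrightarrow> x \<in> cat_V n L \<Longrightarrow> tau p q x \<in> cat_V n L"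
  by (auto simp: tau_def)

lemma cd_cong: "fst x' = fst x \<Longrightarrow> fst y' = fst y \<Longrightarrow> (snd x' = 0) = (snd x = 0) \<Longrightarrow>
   (snd y' = 0) = (snd y = 0) \<Longrightarrow> (x' = y') = (x = y) \<Longrightarrow> cd x' y' = cd x y"
  by (simp add: cd_def)

lemma tau_cd: assumes "fst p = fst q" "snd p \<noteq> 0" "snd q \<noteq> 0"
  shows "cd (tau p q x) (tau p q y) = cd x y"
proof (rule cd_cong)
  show "fst (tau p q x) = fst x" "fst (tau p q y) = fst y" using assms by (auto simp: tau_def)
  show "(snd (tau p q x) = 0) = (snd x = 0)" "(snd (tau p q y) = 0) = (snd y = 0)"
    using assms by (auto simp: tau_def)
  show "(tau p q x = tau p q y) = (x = y)" by (metis tau_inv)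
qed

lemma twin: assumes inj: "inj_on (vstring (cat_V n L) (cat_E n L) f) (cat_V n L)"
  and p: "p \<in> cat_V n L" and q: "q \<in> cat_V n L"
  and "fst p = fst q" "snd p \<noteq> 0" "snd q \<noteq> 0" and fe: "f p = f q"
  shows "p = q"
proof -
  have "vstring (cat_V n L) (cat_E n L) f (tau p q p) = vstring (cat_V n L) (cat_E n L) f p"
  proof (rule vstring_auto[where \<pi>="tau p q"])
    fix x assume "x \<in> cat_V n L"
    then show "f (tau p q x) = f x" using fe by (auto simp: tau_def)
  qed (use p q tau_inv tau_V tau_cd[OF assms(4-6)] in blast)+
  moreover have "tau p q p = q" by (simp add: tau_def)
  ultimately show ?thesis using inj p q unfolding inj_on_def by metis
qed

lemma lower_M: assumes inj: "inj_on (vstring (cat_V n L) (cat_E n L) f) (cat_V n L)"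
  and "n \<ge> 1"
  shows "Max (L ` {1..n}) \<le> card (f ` cat_V n L)"
proof -
  let ?M = "Max (L ` {1..n})"
  have "?M \<in> L ` {1..n}" using assms(2) by (intro Max_in) auto
  then obtain i0 where i0: "i0 \<in> {1..n}" "L i0 = ?M" by (metis imageE)
  let ?A = "(\<lambda>j. (i0, j)) ` {1..?M}"
  have AV: "?A \<subseteq> cat_V n L" using i0 by (auto simp: cat_V_def)
  have "inj_on f ?A"
  proof (rule inj_onI)
    fix x y assume "x \<in> ?A" "y \<in> ?A" "f x = f y"
    then show "x = y" using twin[OF inj, of x y] i0 by (auto simp: cat_V_def)
  qed
  then have "card (f ` ?A) = card ?A" by (rule card_image)
  also have "card ?A = ?M" by (subst card_image) (auto simp: inj_on_def)
  finally have "card (f ` ?A) = ?M" .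
  moreover have "card (f ` ?A) \<le> card (f ` cat_V n L)"
    using AV finite_V by (intro card_mono) auto
  ultimately show ?thesis by simp
qed

lemma lower_2: assumes inj: "inj_on (vstring (cat_V n L) (cat_E n L) f) (cat_V n L)"
  and "n \<ge> 1" "L 1 \<ge> 1" "L n \<ge> 1" and sym: "symmetric_caterpillar n L"
  shows "2 \<le> card (f ` cat_V n L)"
proof (rule ccontr)
  assume "\<not> 2 \<le> card (f ` cat_V n L)"
  then have "card (f ` cat_V n L) \<le> Suc 0" by simp
  moreover have fin: "finite (f ` cat_V n L)" using finite_V by simp
  ultimately have all: "\<forall>a1\<in>f ` cat_V n L. \<forall>a2\<in>f ` cat_V n L. a1 = a2"
    using card_le_Suc0_iff_eq by blast
  have const: "\<And>x y. x \<in> cat_V n L \<Longrightarrow> y \<in> cat_V n L \<Longrightarrow> f x = f y"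
  proof -
    fix x y assume "x \<in> cat_V n L" "y \<in> cat_V n L"
    then have "f x \<in> f ` cat_V n L" "f y \<in> f ` cat_V n L" by auto
    then show "f x = f y" using all by blast
  qed
  have p1: "(1,0) \<in> cat_V n L" using assms(2,3) by (simp add: cat_V_def)
  have p2: "(1,1) \<in> cat_V n L" using assms(2,3) by (simp add: cat_V_def)
  consider "n \<ge> 2" | "n = 1" "L 1 \<ge> 2" | "n = 1" "L 1 = 1" using assms by linarith
  then show False
  proof cases
    case 1
    have "vstring (cat_V n L) (cat_E n L) f (sig n (1,0)) = vstring (cat_V n L) (cat_E n L) f (1,0)"
    proof (rule vstring_auto[where \<pi>="sig n"])
      show "\<And>x. x \<in> cat_V n L \<Longrightarrow> sig n x \<in> cat_V n L" by (rule sig_V[OF sym])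
      show "\<And>x. x \<in> cat_V n L \<Longrightarrow> sig n (sig n x) = x" by (rule sig_inv)
      show "\<And>x y. x \<in> cat_V n L \<Longrightarrow> y \<in> cat_V n L \<Longrightarrow> cd (sig n x) (sig n y) = cd x y"
        by (rule sig_cd)
      show "(1,0) \<in> cat_V n L" by (rule p1)
      show "\<And>x. x \<in> cat_V n L \<Longrightarrow> f (sig n x) = f x" using const sig_V[OF sym] by blast
    qed
    then have "sig n (1,0) = (1,0)" by (rule inj_onD[OF inj _ sig_V[OF sym p1] p1])
    moreover have "sig n (1,0) \<noteq> (1,0)" using 1 by (simp add: sig_def)
    ultimately show False by simp
  next
    case 2
    have p3: "(1,2) \<in> cat_V n L" using 2 by (simp add: cat_V_def)
    show False using twin[OF inj p2 p3] const[OF p2 p3] by simp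
  next
    case 3
    have V: "cat_V n L = {(1,0),(1,1)}" using 3 by (auto simp: cat_V_def)
    have "vstring (cat_V n L) (cat_E n L) f (tau (1,0) (1,1) (1,0)) = vstring (cat_V n L) (cat_E n L) f (1,0)"
    proof (rule vstring_auto[where \<pi>="tau (1,0) (1,1)"])
      fix x y assume "x \<in> cat_V n L" "y \<in> cat_V n L"
      then show "cd (tau (1, 0) (1, 1) x) (tau (1, 0) (1, 1) y) = cd x y"
        unfolding V by (auto simp: tau_def cd_def)
    next
      show tV: "\<And>x. x \<in> cat_V n L \<Longrightarrow> tau (1,0) (1,1) x \<in> cat_V n L"
        unfolding V by (auto simp: tau_def)
      show "\<And>x. x \<in> cat_V n L \<Longrightarrow> tau (1,0) (1,1) (tau (1,0) (1,1) x) = x" by (rule tau_inv)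
      show "(1,0) \<in> cat_V n L" by (rule p1)
      show "\<And>x. x \<in> cat_V n L \<Longrightarrow> f (tau (1,0) (1,1) x) = f x"
        using const tV by blast
    qed
    moreover have "tau (1,0) (1,1) (1,0) = (1,1)" by (simp add: tau_def)
    ultimately have "vstring (cat_V n L) (cat_E n L) f (1,1) = vstring (cat_V n L) (cat_E n L) f (1,0)"
      by simp
    then have "((1::nat),(1::nat)) = (1,0)" by (rule inj_onD[OF inj _ p2 p1])
    then show False by simp
  qed
qed

definition hh :: "nat \<Rightarrow> real" where "hh j = 2 - 1 / real j"

definition FF :: "nat \<times> nat \<Rightarrow> real" where
  "FF x = (if snd x = 0 then (if fst x = 1 then hh 2 else hh 1) else hh (snd x))"

definition ec :: "nat \<Rightarrow> nat \<times> nat \<Rightarrow> nat" where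
  "ec n x = max (fst x - 1) (n - fst x) + 1 + (if snd x = 0 then 0 else 1)"

lemma hh_inj: "1 \<le> a \<Longrightarrow> 1 \<le> b \<Longrightarrow> hh a = hh b \<Longrightarrow> a = b"
  by (simp add: hh_def)

lemma hh1: "hh 1 = 1" by (simp add: hh_def)
lemma hh2: "hh 2 = 3/2" by (simp add: hh_def)

lemma hh_ge1: "1 \<le> j \<Longrightarrow> 1 \<le> hh j"
  by (simp add: hh_def)

lemma hh_lt2: "hh j < 2 \<or> j = 0"
  by (auto simp: hh_def)

lemma FF_ge1: "1 \<le> FF x"
  by (auto simp: FF_def intro: hh_ge1)

lemma FF_spine: "snd x = 0 \<Longrightarrow> FF x \<le> 3/2"
  by (auto simp: FF_def hh_def)

lemma FF_nonneg: "0 \<le> FF x"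
  using FF_ge1[of x] by linarith

lemma card_FF: assumes "n \<ge> 1" "L 1 \<ge> 1"
  shows "card (FF ` cat_V n L) = max (Max (L ` {1..n})) 2"
proof -
  let ?M = "Max (L ` {1..n})" let ?K = "max ?M 2"
  have Mge: "\<And>i. 1 \<le> i \<Longrightarrow> i \<le> n \<Longrightarrow> L i \<le> ?M" by (intro Max_ge) auto
  have "?M \<in> L ` {1..n}" using assms(1) by (intro Max_in) auto
  then obtain i0 where i0: "i0 \<in> {1..n}" "L i0 = ?M" by (metis imageE)
  have "FF ` cat_V n L = hh ` {1..?K}"
  proof
    show "FF ` cat_V n L \<subseteq> hh ` {1..?K}"
    proof
      fix y assume "y \<in> FF ` cat_V n L"
      then obtain i j where ij: "1 \<le> i" "i \<le> n" "j \<le> L i" "y = FF (i,j)"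
        by (auto simp: cat_V_def)
      show "y \<in> hh ` {1..?K}"
      proof (cases "j = 0")
        case True
        have 12: "1 \<in> {1..?K}" "2 \<in> {1..?K}" by auto
        show ?thesis
        proof (cases "i = 1")
          case True
          then have "y = hh 2" using ij \<open>j = 0\<close> by (simp add: FF_def)
          then show ?thesis using 12 by blast
        next
          case False
          then have "y = hh 1" using ij \<open>j = 0\<close> by (simp add: FF_def)
          then show ?thesis using 12 by blast
        qed
      next
        case False
        have "L i \<le> ?M" using ij by (intro Mge)
        then have "j \<le> ?M" by (rule le_trans[OF ij(3)])
        then have "j \<le> ?K" by (rule le_trans[OF _ max.cobounded1])
        then have "j \<in> {1..?K}" using False by auto
        then show ?thesis using ij False by (auto simp: FF_def)
      qed
    qed
  next
    show "hh ` {1..?K} \<subseteq> FF ` cat_V n L"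
    proof
      fix y assume "y \<in> hh ` {1..?K}"
      then obtain j where j: "j \<in> {1..?K}" "y = hh j" by auto
      show "y \<in> FF ` cat_V n L"
      proof (cases "j \<le> ?M")
        case True
        then have "(i0, j) \<in> cat_V n L" using i0 by (auto simp: cat_V_def)
        moreover have "FF (i0, j) = y" using j by (auto simp: FF_def)
        ultimately show ?thesis by (metis imageI)
      next
        case False
        moreover have "L 1 \<le> ?M" using assms by (intro Mge) auto
        ultimately have "j = 2" using j assms(2) by auto
        moreover have "(1, 0) \<in> cat_V n L" using assms by (auto simp: cat_V_def)
        moreover have "FF (1, 0) = hh 2" by (simp add: FF_def)
        ultimately show ?thesis using j by (metis imageI)
      qed
    qed
  qed
  moreover have "inj_on hh {1..?K}" by (rule inj_onI) (auto intro: hh_inj)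
  ultimately show ?thesis by (simp add: card_image)
qed

lemma ec_bound: "x \<in> cat_V n L \<Longrightarrow> y \<in> cat_V n L \<Longrightarrow> cd x y \<le> ec n x"
  by (cases x; cases y) (auto simp: cd_def ec_def cat_V_def)

lemma ec_attained: assumes "n \<ge> 2" "L 1 \<ge> 1" "L n \<ge> 1" "x \<in> cat_V n L"
  shows "\<exists>y\<in>cat_V n L. cd x y = ec n x"
proof -
  obtain i a where x: "x = (i,a)" "1 \<le> i" "i \<le> n" using assms(4) by (cases x) (auto simp: cat_V_def)
  have p: "(1,1) \<in> cat_V n L" "(n,1) \<in> cat_V n L" using assms by (auto simp: cat_V_def)
  show ?thesis
  proof (cases "i - 1 \<ge> n - i")
    case True
    then have "cd x (1,1) = ec n x" using x assms(1) by (auto simp: cd_def ec_def)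
    then show ?thesis using p by blast
  next
    case False
    then have "cd x (n,1) = ec n x" using x assms(1) by (auto simp: cd_def ec_def)
    then show ?thesis using p by blast
  qed
qed

lemma Sc_pos: assumes "y \<in> cat_V n L" "cd x y = t" shows "Sc n L FF x t \<ge> 1"
proof -
  have "FF y \<le> Sc n L FF x t" unfolding Sc_def
    by (rule member_le_sum) (use assms finite_V FF_nonneg in auto)
  then show ?thesis using FF_ge1[of y] by linarith
qed

lemma Sc_zero: assumes "\<And>y. y \<in> cat_V n L \<Longrightarrow> cd x y \<noteq> t" shows "Sc n L f x t = 0"
proof -
  have e: "{w \<in> cat_V n L. cd x w = t} = {}" using assms by blast
  show ?thesis unfolding Sc_def e by simp
qed

lemma Sc_leaf: assumes "(k,b) \<in> cat_V n L" "b \<noteq> 0" shows "Sc n L f (k,b) 1 = f (k,0)"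
proof -
  have "{w \<in> cat_V n L. cd (k,b) w = 1} = {(k,0)}"
  proof
    show "{w \<in> cat_V n L. cd (k,b) w = 1} \<subseteq> {(k,0)}"
      using assms by (auto simp: cd_def split: if_splits)
    show "{(k,0)} \<subseteq> {w \<in> cat_V n L. cd (k,b) w = 1}"
      using assms by (auto simp: cd_def cat_V_def)
  qed
  then show ?thesis by (simp add: Sc_def)
qed

lemma Sc_two: assumes "p \<in> cat_V n L" "q \<in> cat_V n L" "p \<noteq> q" "cd x p = 1" "cd x q = 1"
  shows "Sc n L FF x 1 \<ge> 2"
proof -
  have "sum FF {p,q} \<le> Sc n L FF x 1" unfolding Sc_def
    by (rule sum_mono2) (use assms finite_V FF_nonneg in auto)
  moreover have "sum FF {p,q} = FF p + FF q" using assms(3) by simp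
  ultimately show ?thesis using FF_ge1[of p] FF_ge1[of q] by linarith
qed

lemma FF_sig: assumes "n \<ge> 2" "w \<in> cat_V n L"
  shows "FF (sig n w) - FF w = (if w = (n,0) then 1/2 else 0) - (if w = (1,0) then 1/2 else 0)"
  using assms by (cases w) (auto simp: FF_def sig_def cat_V_def hh_def)

lemma refl_neq: assumes "n \<ge> 2" "L 1 \<ge> 1" "L n \<ge> 1" and sym: "symmetric_caterpillar n L"
  and v: "v \<in> cat_V n L" and ne: "sig n v \<noteq> v"
  shows "vstring (cat_V n L) (cat_E n L) FF (sig n v) \<noteq> vstring (cat_V n L) (cat_E n L) FF v"
proof
  assume eq: "vstring (cat_V n L) (cat_E n L) FF (sig n v) = vstring (cat_V n L) (cat_E n L) FF v"
  obtain i a where ia: "v = (i,a)" "1 \<le> i" "i \<le> n" using v by (cases v) (auto simp: cat_V_def)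
  have ni: "i \<noteq> n + 1 - i" using ne ia by (auto simp: sig_def)
  have p1: "(1,0) \<in> cat_V n L" and pn: "(n,0) \<in> cat_V n L" using assms by (auto simp: cat_V_def)
  have c1: "cd v (1,0) = i - 1 + (if a = 0 then 0 else 1)" using ia by (auto simp: cd_def)
  have c2: "cd v (n,0) = n - i + (if a = 0 then 0 else 1)" using ia by (auto simp: cd_def)
  define t where "t = max (cd v (1,0)) (cd v (n,0))"
  have dne: "cd v (1,0) \<noteq> cd v (n,0)" using c1 c2 ni ia by auto
  have t1: "1 \<le> t" using dne unfolding t_def by linarith
  have td: "t \<le> diam (cat_V n L) (cat_E n L)"
    using diam_ge[OF v p1] diam_ge[OF v pn] unfolding t_def by linarith
  let ?A = "{w \<in> cat_V n L. cd v w = t}"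
  have "Sc n L FF (sig n v) t = Sc n L (FF \<circ> sig n) v t"
    by (rule Sc_reindex[where \<pi>="sig n"]) (use sig_V[OF sym] sig_inv sig_cd v in auto)
  then have "Sc n L FF (sig n v) t - Sc n L FF v t = (\<Sum>w\<in>?A. FF (sig n w) - FF w)"
    by (simp add: Sc_def sum_subtractf)
  also have "\<dots> = (\<Sum>w\<in>?A. (if w = (n,0) then 1/2 else 0) - (if w = (1,0) then 1/2 else 0))"
  proof (rule sum.cong[OF refl])
    fix w assume "w \<in> ?A"
    then show "FF (sig n w) - FF w = (if w = (n,0) then 1/2 else 0) - (if w = (1,0) then 1/2 else 0)"
      by (intro FF_sig[OF assms(1), of w L]) simp
  qed
  also have "\<dots> = (if (n,0) \<in> ?A then 1/2 else 0) - (if (1,0) \<in> ?A then 1/2 else 0)"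
    using finite_V[of n L] by (simp add: sum_subtractf)
  also have "\<dots> \<noteq> 0" using p1 pn dne unfolding t_def by auto
  finally have "Sc n L FF (sig n v) t \<noteq> Sc n L FF v t" by simp
  moreover have "Sc n L FF (sig n v) t = Sc n L FF v t"
    by (rule vstring_eqD[OF sig_V[OF sym v] v eq t1 td])
  ultimately show False by simp
qed

lemma spine_two: assumes "n \<ge> 1" "L 1 \<ge> 1" "L n \<ge> 1" "(i,0) \<in> cat_V n L" "n \<ge> 2 \<or> L 1 \<ge> 2"
  shows "Sc n L FF (i,0) 1 \<ge> 2"
proof -
  have i: "1 \<le> i" "i \<le> n" using assms(4) by (auto simp: cat_V_def)
  consider "n = 1" | "n \<ge> 2" "i = 1" | "n \<ge> 2" "i \<noteq> 1" "i = n" | "n \<ge> 2" "i \<noteq> 1" "i \<noteq> n"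
    using assms(1) by linarith
  then show ?thesis
  proof cases
    case 1
    then have "L 1 \<ge> 2" "i = 1" using assms(5) i by auto
    then show ?thesis by (intro Sc_two[of "(1,1)" n L "(1,2)"]) (auto simp: cat_V_def cd_def \<open>n = 1\<close>)
  next
    case 2
    then show ?thesis using assms(2) by (intro Sc_two[of "(1,1)" n L "(2,0)"]) (auto simp: cat_V_def cd_def)
  next
    case 3
    then show ?thesis using assms(3) by (intro Sc_two[of "(n,1)" n L "(n-1,0)"]) (auto simp: cat_V_def cd_def)
  next
    case 4
    then show ?thesis using i by (intro Sc_two[of "(i-1,0)" n L "(i+1,0)"]) (auto simp: cat_V_def cd_def)
  qed
qed

lemma ec_eq: assumes "n \<ge> 2" "L 1 \<ge> 1" "L n \<ge> 1" "v \<in> cat_V n L" "w \<in> cat_V n L"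
  and S: "\<And>t. 1 \<le> t \<Longrightarrow> t \<le> diam (cat_V n L) (cat_E n L) \<Longrightarrow> Sc n L FF v t = Sc n L FF w t"
  shows "ec n w \<ge> ec n v"
proof (rule ccontr)
  assume lt: "\<not> ec n w \<ge> ec n v"
  obtain y where y: "y \<in> cat_V n L" "cd v y = ec n v" using ec_attained[OF assms(1-4)] by blast
  have t1: "1 \<le> ec n v" by (simp add: ec_def)
  have td: "ec n v \<le> diam (cat_V n L) (cat_E n L)" using diam_ge[OF assms(4) y(1)] y(2) by simp
  have "Sc n L FF v (ec n v) \<ge> 1" by (rule Sc_pos[OF y])
  moreover have "Sc n L FF w (ec n v) = 0"
  proof (rule Sc_zero)
    fix z assume "z \<in> cat_V n L"
    then show "cd w z \<noteq> ec n v" using ec_bound[OF assms(5), of z] lt by auto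
  qed
  ultimately show False using S[OF t1 td] by simp
qed

lemma FF_inj: assumes n1: "n \<ge> 1" and l1: "L 1 \<ge> 1" and ln: "L n \<ge> 1" and sym: "symmetric_caterpillar n L"
  shows "inj_on (vstring (cat_V n L) (cat_E n L) FF) (cat_V n L)"
proof (rule inj_onI)
  fix v w assume v: "v \<in> cat_V n L" and w: "w \<in> cat_V n L"
    and eq: "vstring (cat_V n L) (cat_E n L) FF v = vstring (cat_V n L) (cat_E n L) FF w"
  have fe: "FF v = FF w" by (rule f_eq[OF v w eq])
  have S: "\<And>t. 1 \<le> t \<Longrightarrow> t \<le> diam (cat_V n L) (cat_E n L) \<Longrightarrow> Sc n L FF v t = Sc n L FF w t"
    by (rule vstring_eqD[OF v w eq])
  have p1: "(1,0) \<in> cat_V n L" and p2: "(1,1) \<in> cat_V n L" using n1 l1 by (auto simp: cat_V_def)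
  have d1: "1 \<le> diam (cat_V n L) (cat_E n L)"
    using diam_ge[OF p1 p2] by (simp add: cd_def)
  obtain i a where ia: "v = (i,a)" "1 \<le> i" "i \<le> n" "a \<le> L i" using v by (cases v) (auto simp: cat_V_def)
  obtain k b where kb: "w = (k,b)" "1 \<le> k" "k \<le> n" "b \<le> L k" using w by (cases w) (auto simp: cat_V_def)
  have mixed: False if x: "x = (i',0)" "x \<in> cat_V n L" and y: "y = (k',b')" "y \<in> cat_V n L" "b' \<noteq> 0"
    and fxy: "FF x = FF y" and Sxy: "Sc n L FF x 1 = Sc n L FF y 1" for x y i' k' b'
  proof -
    have "n \<ge> 2 \<or> L 1 \<ge> 2"
    proof (rule ccontr)
      assume "\<not> (n \<ge> 2 \<or> L 1 \<ge> 2)"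
      then have "n = 1" using n1 by auto
      then have "i' = 1" "k' = 1" using x y by (auto simp: cat_V_def)
      then have "hh b' = hh 2" using fxy x y by (simp add: FF_def)
      then have "b' = 2" using y(3) by (intro hh_inj) auto
      moreover have "b' \<le> L 1" using y \<open>k' = 1\<close> by (auto simp: cat_V_def)
      ultimately show False using \<open>\<not> (n \<ge> 2 \<or> L 1 \<ge> 2)\<close> by simp
    qed
    then have "Sc n L FF x 1 \<ge> 2" using spine_two[OF n1 l1 ln, of i'] x by simp
    moreover have "Sc n L FF y 1 = FF (k',0)" using Sc_leaf[of k' b' n L FF] y by simp
    moreover have "FF (k',0) \<le> 3/2" by (rule FF_spine) simp
    ultimately show False using Sxy by simp
  qed
  have ab: "(a = 0) = (b = 0)"
    using mixed[OF _ v _ w, of i k b] mixed[OF _ w _ v, of k i a] ia kb fe S[OF order_refl d1] by auto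
  have ab2: "a = b"
  proof (cases "a = 0")
    case True then show ?thesis using ab by simp
  next
    case False
    then have "hh a = hh b" using ab fe ia kb by (simp add: FF_def)
    then show ?thesis using False ab by (intro hh_inj) auto
  qed
  show "v = w"
  proof (cases "n = 1")
    case True
    then show ?thesis using ia kb ab2 by auto
  next
    case False
    then have n2: "n \<ge> 2" using n1 by simp
    have "ec n v = ec n w"
      using ec_eq[OF n2 l1 ln v w S] ec_eq[OF n2 l1 ln w v] S by (metis le_antisym)
    then have "max (i - 1) (n - i) = max (k - 1) (n - k)" using ia kb ab2 by (simp add: ec_def)
    then have "k = i \<or> k = n + 1 - i" using ia kb by (auto simp: max_def split: if_splits)
    then show ?thesis
    proof
      assume "k = i" then show ?thesis using ia kb ab2 by simp
    next
      assume k: "k = n + 1 - i"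
      show ?thesis
      proof (rule ccontr)
        assume "v \<noteq> w"
        have "sig n v = w" using k ia kb ab2 by (simp add: sig_def)
        then have "sig n v \<noteq> v" using \<open>v \<noteq> w\<close> by simp
        from refl_neq[OF n2 l1 ln sym v this] eq \<open>sig n v = w\<close> show False by simp
      qed
    qed
  qed
qed

theorem mainTheorem15:
  fixes n :: nat and L :: "nat \<Rightarrow> nat"
  assumes "n \<ge> 1" and "L 1 \<ge> 1" and "L n \<ge> 1"
    and "symmetric_caterpillar n L"
  shows "IDI (cat_V n L) (cat_E n L) =
           (let M = Max (L ` {1..n}) in if M \<ge> 2 then M else 2)"
proof -
  have "IDI (cat_V n L) (cat_E n L) = max (Max (L ` {1..n})) 2"
    unfolding IDI_def
  proof (rule Least_equality)
    show "\<exists>f. card (f ` cat_V n L) = max (Max (L ` {1..n})) 2 \<and>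
        inj_on (vstring (cat_V n L) (cat_E n L) f) (cat_V n L)"
      using card_FF[of n L, OF assms(1,2)] FF_inj[OF assms] by blast
  next
    fix k assume "\<exists>f. card (f ` cat_V n L) = k \<and> inj_on (vstring (cat_V n L) (cat_E n L) f) (cat_V n L)"
    then obtain f where f: "card (f ` cat_V n L) = k" "inj_on (vstring (cat_V n L) (cat_E n L) f) (cat_V n L)"
      by blast
    show "max (Max (L ` {1..n})) 2 \<le> k"
      using lower_M[OF f(2) assms(1)] lower_2[OF f(2) assms] f(1) by simp
  qed
  then show ?thesis by (simp add: Let_def max_def)
qed

end
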